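(* Let $H(\mathbb C)$ be the space of entire functions with the topology of locally uniform convergence, identified with the space of sequences $(x(n))_{n\ge0}$ of Taylor coefficients at $0$ and endowed with the Hadamard (coordinatewise) product, and let $D:f\mapsto f'$ be the differentiation operator, i.e. $D(x(0),x(1),x(2),\ldots)=(x(1),2x(2),3x(3),\ldots)$. If $x$ is a frequently hypercyclic vector for $D$, then there exists a natural number $M$ such that $x^m$ is not hypercyclic for $D$ for any $m\ge M$. In particular, $D$ does not have any frequently hypercyclic algebra.
   Context: A vector $x$ is hypercyclic for $T$ if its orbit $\{T^nx:n\ge0\}$ is dense; frequently hypercyclic if for every non-empty open $U$ the set $\{n\in\mathbb N_0:T^nx\in U\}$ has positive lower density $\liminf_{N\to\infty}\frac{\mathrm{card}(A\cap[0,N])}{N+1}$. Powers $x^m$ are taken for the Hadamard product. A frequently hypercyclic algebra is a subalgebra $\ne\{0\}$ all of whose non-zero elements are frequently hypercyclic. *)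

theory Defs
  imports "HOL-Analysis.Analysis"
begin

text \<open>Entire functions identified with their Taylor coefficient sequences at 0:
  a sequence x is (the coefficient sequence of) an entire function iff its
  power series converges absolutely on every disc.\<close>
definition entire_seqs :: "(nat \<Rightarrow> complex) set" where
  "entire_seqs = {x. \<forall>R::real. summable (\<lambda>n. norm (x n) * R ^ n)}"

definition fun_of_seq :: "(nat \<Rightarrow> complex) \<Rightarrow> complex \<Rightarrow> complex" where
  "fun_of_seq x w = (\<Sum>n. x n * w ^ n)"

definition lu_nbhd :: "(nat \<Rightarrow> complex) \<Rightarrow> real \<Rightarrow> real \<Rightarrow> (nat \<Rightarrow> complex) set" where
  "lu_nbhd y R e = {z \<in> entire_seqs. \<forall>w. cmod w \<le> R \<longrightarrow>
       cmod (fun_of_seq z w - fun_of_seq y w) < e}"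

definition lu_open :: "(nat \<Rightarrow> complex) set \<Rightarrow> bool" where
  "lu_open U \<longleftrightarrow> U \<subseteq> entire_seqs \<and>
     (\<forall>y\<in>U. \<exists>R>0. \<exists>e>0. lu_nbhd y R e \<subseteq> U)"

definition Dop :: "(nat \<Rightarrow> complex) \<Rightarrow> (nat \<Rightarrow> complex)" where
  "Dop x = (\<lambda>n. of_nat (Suc n) * x (Suc n))"

definition hpow :: "(nat \<Rightarrow> complex) \<Rightarrow> nat \<Rightarrow> (nat \<Rightarrow> complex)" where
  "hpow x m = (\<lambda>n. x n ^ m)"

definition lower_density :: "nat set \<Rightarrow> ereal" where
  "lower_density A = liminf (\<lambda>N. ereal (real (card (A \<inter> {0..N})) / real (N + 1)))"

definition hypercyclic_D :: "(nat \<Rightarrow> complex) \<Rightarrow> bool" where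
  "hypercyclic_D x \<longleftrightarrow> x \<in> entire_seqs \<and>
     (\<forall>U. lu_open U \<and> U \<noteq> {} \<longrightarrow> (\<exists>n. (Dop ^^ n) x \<in> U))"

definition freq_hypercyclic_D :: "(nat \<Rightarrow> complex) \<Rightarrow> bool" where
  "freq_hypercyclic_D x \<longleftrightarrow> x \<in> entire_seqs \<and>
     (\<forall>U. lu_open U \<and> U \<noteq> {} \<longrightarrow> lower_density {n. (Dop ^^ n) x \<in> U} > 0)"

definition hadamard_subalgebra :: "(nat \<Rightarrow> complex) set \<Rightarrow> bool" where
  "hadamard_subalgebra A \<longleftrightarrow> A \<subseteq> entire_seqs \<and> (\<lambda>n. 0) \<in> A \<and>
     (\<forall>x\<in>A. \<forall>y\<in>A. (\<lambda>n. x n + y n) \<in> A) \<and>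
     (\<forall>c::complex. \<forall>x\<in>A. (\<lambda>n. c * x n) \<in> A) \<and>
     (\<forall>x\<in>A. \<forall>y\<in>A. (\<lambda>n. x n * y n) \<in> A)"

definition freq_hypercyclic_algebra_D :: "(nat \<Rightarrow> complex) set \<Rightarrow> bool" where
  "freq_hypercyclic_algebra_D A \<longleftrightarrow> hadamard_subalgebra A \<and> A \<noteq> {\<lambda>n. 0} \<and>
     (\<forall>x\<in>A. x \<noteq> (\<lambda>n. 0) \<longrightarrow> freq_hypercyclic_D x)"

end

theory Submission imports Defs "HOL-Complex_Analysis.Complex_Analysis" begin

lemma zero_entire: "(\<lambda>n. 0) \<in> entire_seqs"
  by (simp add: entire_seqs_def)

lemma fun_of_seq_0: "fun_of_seq z 0 = z 0"
  by (simp add: fun_of_seq_def)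

lemma coeff_bound:
  assumes z: "z \<in> entire_seqs" and b: "\<And>w. cmod w \<le> 1 \<Longrightarrow> cmod (fun_of_seq z w) \<le> 1"
  shows "cmod (z k) \<le> 1"
proof -
  define F where "F = Abs_fps z"
  have sm: "summable (\<lambda>n. z n * w ^ n)" for w
  proof (rule summable_norm_cancel)
    have "summable (\<lambda>n. norm (z n) * norm w ^ n)" using z by (simp add: entire_seqs_def)
    thus "summable (\<lambda>n. norm (z n * w ^ n))" by (simp add: norm_mult norm_power)
  qed
  have rad: "fps_conv_radius F = \<infinity>"
    unfolding fps_conv_radius_def F_def by (simp add: conv_radius_inftyI'' sm)
  have ev: "eval_fps F = fun_of_seq z"
    by (simp add: eval_fps_def F_def fun_of_seq_def fun_eq_iff)
  have "z k = (deriv ^^ k) (eval_fps F) 0 / fact k"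
    using fps_nth_conv_deriv[of F k] rad by (simp add: F_def)
  moreover have "norm ((deriv ^^ k) (eval_fps F) 0) \<le> fact k * 1 / 1 ^ k"
  proof (rule Cauchy_inequality)
    show "eval_fps F holomorphic_on ball 0 1"
      by (rule holomorphic_on_eval_fps) (simp add: rad)
    show "continuous_on (cball 0 1) (eval_fps F)"
      using continuous_on_eval_fps[of F] rad by (auto intro: continuous_on_subset)
    show "norm (eval_fps F x) \<le> 1" if "norm (0 - x) = 1" for x
      using b[of x] that ev by simp
  qed simp
  ultimately show ?thesis by (simp add: norm_divide)
qed

lemma Dop_pow: "(Dop ^^ n) x k * fact k = fact (n + k) * x (n + k)"
proof (induction n arbitrary: k)
  case 0 then show ?case by simp
next
  case (Suc n)
  have "(Dop ^^ Suc n) x k * fact k = of_nat (Suc k) * (Dop ^^ n) x (Suc k) * fact k"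
    by (simp add: Dop_def)
  also have "\<dots> = (Dop ^^ n) x (Suc k) * fact (Suc k)"
    by (simp add: algebra_simps)
  also have "\<dots> = fact (Suc n + k) * x (Suc n + k)"
    using Suc[of "Suc k"] by simp
  finally show ?case .
qed

lemma fact_low:
  assumes "t \<le> N" "0 \<le> a" "a \<le> real (N - t) + 1"
  shows "fact (N - t) * a ^ t \<le> (fact N :: real)"
  using assms
proof (induction t)
  case 0 then show ?case by simp
next
  case (Suc t)
  have e: "N - t = Suc (N - Suc t)" using Suc.prems by simp
  have "fact (N - Suc t) * a ^ Suc t = (fact (N - Suc t) * a) * a ^ t" by simp
  also have "\<dots> \<le> (fact (N - Suc t) * real (N - t)) * a ^ t"
    using Suc.prems e by (intro mult_right_mono mult_left_mono) auto
  also have "fact (N - Suc t) * real (N - t) = fact (N - t)"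
    by (subst (2) e) (simp add: e algebra_simps)
  also have "fact (N - t) * a ^ t \<le> fact N"
    using Suc.prems by (intro Suc.IH) auto
  finally show ?case .
qed


lemma key_arith:
  fixes x :: "nat \<Rightarrow> complex" and \<delta> :: real
  assumes dpos: "\<delta> > 0"
    and H: "\<And>N. N \<ge> N0 \<Longrightarrow> \<exists>n\<le>N. \<delta> * (real N + 1) < real n + 1 \<and>
                 (\<forall>k. cmod (x (n + k)) * fact (n + k) \<le> fact k)"
  shows "\<exists>M. \<forall>m\<ge>M. \<exists>N1. \<forall>N\<ge>N1. fact N * cmod (x N) ^ m \<le> 1/4"
proof -
  define q where "q = nat \<lceil>2 / \<delta>\<rceil> + 2"
  have q2: "q \<ge> 2" by (simp add: q_def)
  have "real q \<ge> 2 / \<delta>" unfolding q_def by linarith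
  hence qd: "real q * \<delta> \<ge> 2" using dpos by (simp add: field_simps)
  show ?thesis
  proof (rule exI[of _ "4 * q"], intro allI impI)
    fix m assume mM: "m \<ge> 4 * q"
    show "\<exists>N1. \<forall>N\<ge>N1. fact N * cmod (x N) ^ m \<le> 1/4"
    proof (rule exI[of _ "N0 + 2 * q + 4"], intro allI impI)
      fix N assume N1: "N \<ge> N0 + 2 * q + 4"
      obtain n where nN: "n \<le> N" and nd: "\<delta> * (real N + 1) < real n + 1"
        and nb: "\<And>k. cmod (x (n + k)) * fact (n + k) \<le> fact k"
        using H[of N] N1 by auto
      define t where "t = N div q"
      have qt: "q * t \<le> N" unfolding t_def by simp
      have qt2: "q * t + q \<ge> N + 1"
      proof -
        have "N mod q < q" using q2 by simp
        moreover have "q * t + N mod q = N" unfolding t_def by (metis mult.commute div_mult_mod_eq)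
        ultimately show ?thesis by linarith
      qed
      have "real q * (real n + 1) > real q * (\<delta> * (real N + 1))"
        using nd q2 by (intro mult_strict_left_mono) auto
      moreover have "real q * (\<delta> * (real N + 1)) \<ge> 2 * (real N + 1)"
        using qd by (metis mult.assoc mult_right_mono add_nonneg_nonneg of_nat_0_le_iff zero_le_one)
      ultimately have "real q * real n > 2 * real N + 2 - real q" by (simp add: algebra_simps)
      moreover have "real (q * t) \<le> real N" using qt by linarith
      ultimately have "real (q * n) > real (q * t)" using N1 by simp
      hence "q * t < q * n" by linarith
      hence tn: "t < n" by simp
      have t2: "2 * t \<le> N" using qt q2
        by (meson le_trans mult_le_mono1)
      define a where "a = real N / 2"
      have a2: "a \<ge> 2" using N1 by (simp add: a_def)
      have "cmod (x N) * fact N \<le> fact (N - n)"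
        using nb[of "N - n"] nN by simp
      also have "(fact (N - n) :: real) \<le> fact (N - t)"
        using tn by (intro fact_mono) auto
      finally have b1: "cmod (x N) * fact N \<le> fact (N - t)" .
      have "fact (N - t) * a ^ t \<le> (fact N :: real)"
        using t2 a2 by (intro fact_low) (auto simp: a_def)
      have apos: "a ^ t > 0" using a2 by simp
      have b2: "cmod (x N) \<le> 1 / a ^ t"
      proof -
        have "cmod (x N) * fact N * a ^ t \<le> fact (N - t) * a ^ t"
          using b1 apos by (intro mult_right_mono) auto
        also have "\<dots> \<le> fact N" by fact
        finally have "cmod (x N) * a ^ t * fact N \<le> 1 * fact N" by (simp add: algebra_simps)
        hence "cmod (x N) * a ^ t \<le> 1" by (subst (asm) mult_le_cancel_right) (simp add: not_less)
        thus ?thesis using apos by (simp add: field_simps)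
      qed
      have "a ^ t \<ge> 1" using a2 by simp
      hence xle1: "cmod (x N) \<le> 1" using b2 apos
        by (smt (verit, ccfv_SIG) divide_le_eq_1_pos)
      have "cmod (x N) ^ m \<le> cmod (x N) ^ (4 * q)"
        using xle1 mM by (intro power_decreasing) auto
      also have "\<dots> \<le> (1 / a ^ t) ^ (4 * q)"
        using b2 by (intro power_mono) auto
      also have "\<dots> = 1 / (a ^ 2) ^ (2 * q * t)"
        by (simp add: power_mult[symmetric] power_one_over mult_ac)
      also have "\<dots> \<le> 1 / real N ^ (2 * q * t)"
      proof -
        have "a ^ 2 \<ge> real N" using N1 unfolding a_def
          by (simp add: power2_eq_square field_simps)
        hence "real N ^ (2 * q * t) \<le> (a ^ 2) ^ (2 * q * t)"
          by (intro power_mono) auto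
        moreover have "real N ^ (2 * q * t) > 0" using N1 by simp
        ultimately show ?thesis using a2 by (intro divide_left_mono) auto
      qed
      also have "\<dots> \<le> 1 / real N ^ (N + 1)"
      proof -
        have "N + 1 \<le> 2 * q * t" using qt2 N1 by linarith
        hence "real N ^ (N + 1) \<le> real N ^ (2 * q * t)"
          using N1 by (intro power_increasing) auto
        moreover have "real N ^ (N + 1) > 0" using N1 by simp
        ultimately show ?thesis using N1 by (intro divide_left_mono) auto
      qed
      finally have "fact N * cmod (x N) ^ m \<le> fact N * (1 / real N ^ (N + 1))"
        by (intro mult_left_mono) auto
      also have "\<dots> \<le> real N ^ N * (1 / real N ^ (N + 1))"
        using fact_le_power[of N, where 'a=real] by (intro mult_right_mono) auto
      also have "\<dots> = 1 / real N" using N1 by (simp add: field_simps)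
      also have "\<dots> \<le> 1/4" using N1 by (simp add: field_simps)
      finally show "fact N * cmod (x N) ^ m \<le> 1/4" .
    qed
  qed
qed


lemma lu_nbhd_0:
  assumes "z \<in> lu_nbhd y R e" "R \<ge> 0"
  shows "cmod (z 0 - y 0) < e"
  using assms by (auto simp: lu_nbhd_def fun_of_seq_0 dest: spec[of _ 0])

lemma part1:
  assumes fh: "freq_hypercyclic_D x"
  shows "\<exists>M::nat. \<forall>m\<ge>M. \<not> hypercyclic_D (hpow x m)"
proof -
  define U0 where "U0 = {z \<in> entire_seqs. \<exists>e>0. \<forall>w. cmod w \<le> 1 \<longrightarrow> cmod (fun_of_seq z w) < 1 - e}"
  have "lu_open U0"
    unfolding lu_open_def
  proof (intro conjI ballI)
    show "U0 \<subseteq> entire_seqs" by (auto simp: U0_def)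
    fix y assume "y \<in> U0"
    then obtain e where e: "e > 0" "\<And>w. cmod w \<le> 1 \<Longrightarrow> cmod (fun_of_seq y w) < 1 - e"
      by (auto simp: U0_def)
    have "lu_nbhd y 1 (e/2) \<subseteq> U0"
    proof
      fix z assume z: "z \<in> lu_nbhd y 1 (e/2)"
      have "cmod (fun_of_seq z w) < 1 - e/2" if "cmod w \<le> 1" for w
      proof -
        have "cmod (fun_of_seq z w - fun_of_seq y w) < e/2" using z that by (auto simp: lu_nbhd_def)
        moreover have "cmod (fun_of_seq z w) \<le> cmod (fun_of_seq z w - fun_of_seq y w) + cmod (fun_of_seq y w)"
          by (metis diff_add_cancel norm_triangle_ineq)
        ultimately show ?thesis using e(2)[OF that] by linarith
      qed
      thus "z \<in> U0" using z e by (auto simp: U0_def lu_nbhd_def intro!: exI[of _ "e/2"])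
    qed
    thus "\<exists>R>0. \<exists>e>0. lu_nbhd y R e \<subseteq> U0" using e(1) by (metis half_gt_zero zero_less_one)
  qed
  moreover have "(\<lambda>n. 0) \<in> U0"
    by (auto simp: U0_def zero_entire fun_of_seq_def intro!: exI[of _ "1/2"])
  ultimately have ld: "lower_density {n. (Dop ^^ n) x \<in> U0} > 0"
    using fh by (auto simp: freq_hypercyclic_D_def)
  define A where "A = {n. (Dop ^^ n) x \<in> U0}"
  obtain \<delta> where dpos: "0 < ereal \<delta>" and dl: "ereal \<delta> < lower_density A"
    using ereal_dense2[OF ld[folded A_def]] by blast
  have "eventually (\<lambda>N. ereal \<delta> < ereal (real (card (A \<inter> {0..N})) / real (N + 1))) sequentially"
    using less_LiminfD[OF dl[unfolded lower_density_def]] .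
  then obtain N0 where N0: "\<And>N. N \<ge> N0 \<Longrightarrow> \<delta> < real (card (A \<inter> {0..N})) / real (N + 1)"
    by (auto simp: eventually_sequentially)
  have Ab: "cmod (x (n + k)) * fact (n + k) \<le> fact k" if "n \<in> A" for n k
  proof -
    have "(Dop ^^ n) x \<in> U0" using that by (simp add: A_def)
    then have "(Dop ^^ n) x \<in> entire_seqs" "\<And>w. cmod w \<le> 1 \<Longrightarrow> cmod (fun_of_seq ((Dop ^^ n) x) w) \<le> 1"
      by (auto simp: U0_def)
    hence "cmod ((Dop ^^ n) x k) \<le> 1" by (rule coeff_bound)
    hence "cmod ((Dop ^^ n) x k * fact k) \<le> fact k" by (simp add: norm_mult)
    hence "cmod ((Dop ^^ n) x k * fact k) \<le> fact k" .
    also have "cmod ((Dop ^^ n) x k * fact k) = fact (n + k) * cmod (x (n + k))"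
      by (subst Dop_pow) (simp add: norm_mult)
    finally show ?thesis by (simp add: mult.commute)
  qed
  have H: "\<exists>n\<le>N. \<delta> * (real N + 1) < real n + 1 \<and> (\<forall>k. cmod (x (n + k)) * fact (n + k) \<le> fact k)"
    if "N \<ge> N0" for N
  proof -
    have d: "\<delta> * (real N + 1) < real (card (A \<inter> {0..N}))"
      using N0[OF that] by (simp add: field_simps)
    have dp: "\<delta> > 0" using dpos by simp
    have "card (A \<inter> {0..N}) > 0" using d dp
      by (smt (verit) of_nat_0 of_nat_0_le_iff zero_less_mult_iff gr0I)
    hence ne: "A \<inter> {0..N} \<noteq> {}" by auto
    define n where "n = Max (A \<inter> {0..N})"
    have nA: "n \<in> A \<inter> {0..N}" unfolding n_def using ne by (intro Max_in) auto
    have "A \<inter> {0..N} \<subseteq> {0..n}" unfolding n_def by (auto intro: Max_ge)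
    hence "card (A \<inter> {0..N}) \<le> n + 1" using card_mono[of "{0..n}"] by fastforce
    hence "\<delta> * (real N + 1) < real n + 1" using d by linarith
    thus ?thesis using nA Ab by auto
  qed
  obtain M where M: "\<And>m. m \<ge> M \<Longrightarrow> \<exists>N1. \<forall>N\<ge>N1. fact N * cmod (x N) ^ m \<le> 1/4"
    using key_arith[of \<delta> N0 x] H dpos by auto
  show ?thesis
  proof (intro exI allI impI notI)
    fix m assume "m \<ge> M" and hc: "hypercyclic_D (hpow x m)"
    obtain N1 where N1: "\<And>N. N \<ge> N1 \<Longrightarrow> fact N * cmod (x N) ^ m \<le> 1/4"
      using M[OF \<open>m \<ge> M\<close>] by auto
    define B where "B = (\<Sum>N<N1. fact N * cmod (x N) ^ m)"
    have Bb: "fact N * cmod (x N) ^ m \<le> B" if "N < N1" for N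
      unfolding B_def using that by (intro member_le_sum) auto
    have B0: "B \<ge> 0" unfolding B_def by (intro sum_nonneg) auto
    define c where "c = complex_of_real (B + 2)"
    define U where "U = {z \<in> entire_seqs. cmod (z 0 - c) < 1/2}"
    have "lu_open U"
      unfolding lu_open_def
    proof (intro conjI ballI)
      show "U \<subseteq> entire_seqs" by (auto simp: U_def)
      fix y assume y: "y \<in> U"
      have "lu_nbhd y 1 (1/2 - cmod (y 0 - c)) \<subseteq> U"
      proof
        fix z assume z: "z \<in> lu_nbhd y 1 (1/2 - cmod (y 0 - c))"
        have "cmod (z 0 - y 0) < 1/2 - cmod (y 0 - c)" using lu_nbhd_0[OF z] by simp
        moreover have "cmod (z 0 - c) \<le> cmod (z 0 - y 0) + cmod (y 0 - c)"
          by (metis diff_add_cancel diff_diff_add norm_triangle_ineq add.commute)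
        ultimately show "z \<in> U" using z by (auto simp: U_def lu_nbhd_def)
      qed
      moreover have "1/2 - cmod (y 0 - c) > 0" using y by (simp add: U_def)
      ultimately show "\<exists>R>0. \<exists>e>0. lu_nbhd y R e \<subseteq> U"
        by (metis zero_less_one)
    qed
    moreover have "(\<lambda>n. if n = 0 then c else 0) \<in> U"
      by (auto simp: U_def entire_seqs_def intro!: summable_finite[of "{0}"] split: if_splits)
    ultimately obtain n where n: "(Dop ^^ n) (hpow x m) \<in> U"
      using hc unfolding hypercyclic_D_def by blast
    have "(Dop ^^ n) (hpow x m) 0 = fact n * x n ^ m"
      using Dop_pow[of n "hpow x m" 0] by (simp add: hpow_def)
    hence "cmod ((Dop ^^ n) (hpow x m) 0) = fact n * cmod (x n) ^ m"
      by (simp add: norm_mult norm_power)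
    moreover have "fact n * cmod (x n) ^ m \<le> B + 1"
      using Bb[of n] N1[of n] B0 by (cases "n < N1") auto
    moreover have "cmod ((Dop ^^ n) (hpow x m) 0 - c) < 1/2" using n by (simp add: U_def)
    moreover have "cmod c = B + 2" using B0 by (simp add: c_def)
    moreover have "cmod c \<le> cmod ((Dop ^^ n) (hpow x m) 0 - c) + cmod ((Dop ^^ n) (hpow x m) 0)"
      by (metis add.commute diff_add_cancel minus_diff_eq norm_minus_cancel norm_triangle_ineq)
    ultimately show False by linarith
  qed
qed


lemma fh_imp_h: "freq_hypercyclic_D x \<Longrightarrow> hypercyclic_D x"
proof -
  assume fh: "freq_hypercyclic_D x"
  show "hypercyclic_D x"
    unfolding hypercyclic_D_def
  proof (intro conjI allI impI)
    show "x \<in> entire_seqs" using fh by (simp add: freq_hypercyclic_D_def)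
    fix U assume U: "lu_open U \<and> U \<noteq> {}"
    have ld: "lower_density {n. (Dop ^^ n) x \<in> U} > 0" using fh U by (simp add: freq_hypercyclic_D_def)
    show "\<exists>n. (Dop ^^ n) x \<in> U"
    proof (rule ccontr)
      assume "\<not> ?thesis"
      hence "{n. (Dop ^^ n) x \<in> U} = {}" by auto
      hence "lower_density {n. (Dop ^^ n) x \<in> U} = 0"
        by (simp add: lower_density_def zero_ereal_def[symmetric] Liminf_const)
      thus False using ld by simp
    qed
  qed
qed

lemma hpow_in:
  assumes "hadamard_subalgebra A" "x \<in> A" "m \<ge> 1"
  shows "hpow x m \<in> A"
  using assms(3)
proof (induction m rule: dec_induct)
  case base
  then show ?case using assms(2) by (simp add: hpow_def)
next
  case (step m)
  have "(\<lambda>n. x n * hpow x m n) \<in> A" using assms(1,2) step.IH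
    unfolding hadamard_subalgebra_def by blast
  moreover have "(\<lambda>n. x n * hpow x m n) = hpow x (Suc m)" by (simp add: hpow_def fun_eq_iff)
  ultimately show ?case by simp
qed

theorem proposition3p1:
  shows "(\<forall>x. freq_hypercyclic_D x \<longrightarrow> (\<exists>M::nat. \<forall>m\<ge>M. \<not> hypercyclic_D (hpow x m)))
         \<and> \<not> (\<exists>A. freq_hypercyclic_algebra_D A)"
proof
  show P1: "\<forall>x. freq_hypercyclic_D x \<longrightarrow> (\<exists>M::nat. \<forall>m\<ge>M. \<not> hypercyclic_D (hpow x m))"
    using part1 by blast
  show "\<not> (\<exists>A. freq_hypercyclic_algebra_D A)"
  proof
    assume "\<exists>A. freq_hypercyclic_algebra_D A"
    then obtain A where A: "hadamard_subalgebra A" "A \<noteq> {\<lambda>n. 0}"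
      "\<And>x. x \<in> A \<Longrightarrow> x \<noteq> (\<lambda>n. 0) \<Longrightarrow> freq_hypercyclic_D x"
      unfolding freq_hypercyclic_algebra_D_def by blast
    have "(\<lambda>n. 0) \<in> A" using A(1) by (simp add: hadamard_subalgebra_def)
    then obtain x where x: "x \<in> A" "x \<noteq> (\<lambda>n. 0)" using A(2) by blast
    then obtain k where k: "x k \<noteq> 0" by auto
    obtain M where M: "\<And>m. m \<ge> M \<Longrightarrow> \<not> hypercyclic_D (hpow x m)"
      using part1[OF A(3)[OF x]] by blast
    define m where "m = max M 1"
    have "hpow x m \<in> A" using hpow_in[OF A(1) x(1)] by (simp add: m_def)
    moreover have "hpow x m \<noteq> (\<lambda>n. 0)"
    proof
      assume "hpow x m = (\<lambda>n. 0)"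
      hence "x k ^ m = 0" by (metis hpow_def)
      thus False using k by simp
    qed
    ultimately have "hypercyclic_D (hpow x m)" using A(3) fh_imp_h by blast
    thus False using M[of m] by (simp add: m_def)
  qed
qed

end
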